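(* Let $\mathsf{M}=(E,\mathcal{L})$ be a loopless matroid, let $F_1,\dots,F_k\in\mathcal{L}^*$ be distinct proper flats and let $d_1,\dots,d_k$ be positive integers. Then in $A^*(\mathsf{M})$: if, after possibly relabeling, $F_1,\dots,F_k$ form a flag $\mathcal{F}=(\emptyset\subsetneq F_1\subsetneq\dots\subsetneq F_k\subsetneq E)$, then \[ D_{F_1}^{d_1}\cdots D_{F_k}^{d_k}=D_\mathcal{F}\prod_{i=1}^k(-\psi_{F_i}^--\psi_{F_i}^+)^{d_i-1}, \] where $D_\mathcal{F}=D_{F_1}\cdots D_{F_k}$; and if $F_i$ and $F_j$ are incomparable for some $i,j$, then $D_{F_1}^{d_1}\cdots D_{F_k}^{d_k}=0$.
   Context: A matroid $\mathsf{M}=(E,\mathcal{L})$ consists of a finite ground set $E$ and a collection $\mathcal{L}\subseteq 2^E$ of flats such that (1) the intersection of two flats is a flat, and (2) for every flat $F$, every element of $E\setminus F$ lies in exactly one flat that is minimal among flats strictly containing $F$. It is loopless if $\emptyset\in\mathcal{L}$. Write $\mathcal{L}^*=\mathcal{L}\setminus\{\emptyset,E\}$. The Chow ring is $A^*(\mathsf{M})=\mathbb{Z}[X_F\mid F\in\mathcal{L}^*]/(\mathcal{I}+\mathcal{J})$, where $\mathcal{I}$ is generated by $X_{F_1}X_{F_2}$ for incomparable $F_1,F_2$, and $\mathcal{J}$ is generated by $\sum_{F\in\mathcal{L}^*,\,e\in F}X_F-\sum_{F\in\mathcal{L}^*,\,f\in F}X_F$ for $e,f\in E$; $D_F$ is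 the class of $X_F$. For any flat $F\in\mathcal{L}$ and any $e\in E$, \[ \psi_F^-=\sum_{G\in\mathcal{L}^*,\ e\in G}D_G-\sum_{G\in\mathcal{L}^*,\ G\supseteq F}D_G,\qquad \psi_F^+=\sum_{G\in\mathcal{L}^*,\ e\notin G}D_G-\sum_{G\in\mathcal{L}^*,\ G\subseteq F}D_G, \] which are independent of the choice of $e$. *)

theory Defs
  imports Main "HOL-Library.Poly_Mapping"
begin

definition is_cover :: "'e set set \<Rightarrow> 'e set \<Rightarrow> 'e set \<Rightarrow> bool" where
  "is_cover L F G \<longleftrightarrow> G \<in> L \<and> F \<subset> G \<and> \<not> (\<exists>H\<in>L. F \<subset> H \<and> H \<subset> G)"

definition matroid_flats :: "'e set \<Rightarrow> 'e set set \<Rightarrow> bool" where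
  "matroid_flats E L \<longleftrightarrow>
     finite E \<and> L \<subseteq> Pow E \<and>
     (\<forall>F1\<in>L. \<forall>F2\<in>L. F1 \<inter> F2 \<in> L) \<and>
     (\<forall>F\<in>L. \<forall>e\<in>E - F. \<exists>!G. is_cover L F G \<and> e \<in> G)"

definition loopless :: "'e set \<Rightarrow> 'e set set \<Rightarrow> bool" where
  "loopless E L \<longleftrightarrow> {} \<in> L"

definition proper_flats :: "'e set \<Rightarrow> 'e set set \<Rightarrow> 'e set set" where
  "proper_flats E L = L - {{}, E}"

type_synonym 'e chowpoly = "('e set \<Rightarrow>\<^sub>0 nat) \<Rightarrow>\<^sub>0 int"

definition Xv :: "'e set \<Rightarrow> 'e chowpoly" where
  "Xv F = Poly_Mapping.single (Poly_Mapping.single F 1) 1"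

inductive_set ideal_gen :: "'a::comm_ring_1 set \<Rightarrow> 'a set" for S where
  zero: "0 \<in> ideal_gen S"
| step: "g \<in> S \<Longrightarrow> x \<in> ideal_gen S \<Longrightarrow> r * g + x \<in> ideal_gen S"

definition chow_relations :: "'e set \<Rightarrow> 'e set set \<Rightarrow> 'e chowpoly set" where
  "chow_relations E L =
     {Xv F1 * Xv F2 | F1 F2. F1 \<in> proper_flats E L \<and> F2 \<in> proper_flats E L
                            \<and> \<not> F1 \<subseteq> F2 \<and> \<not> F2 \<subseteq> F1}
   \<union> {(\<Sum>F\<in>{F\<in>proper_flats E L. e \<in> F}. Xv F) - (\<Sum>F\<in>{F\<in>proper_flats E L. f \<in> F}. Xv F)
       | e f. e \<in> E \<and> f \<in> E}"

definition chow_eq :: "'e set \<Rightarrow> 'e set set \<Rightarrow> 'e chowpoly \<Rightarrow> 'e chowpoly \<Rightarrow> bool" where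
  "chow_eq E L p q \<longleftrightarrow> p - q \<in> ideal_gen (chow_relations E L)"

section \<open>psi classes (representatives; independent of the chosen e)\<close>

definition psi_minus :: "'e set \<Rightarrow> 'e set set \<Rightarrow> 'e set \<Rightarrow> 'e chowpoly" where
  "psi_minus E L F = (let e = (SOME e. e \<in> E) in
     (\<Sum>G\<in>{G\<in>proper_flats E L. e \<in> G}. Xv G) - (\<Sum>G\<in>{G\<in>proper_flats E L. F \<subseteq> G}. Xv G))"

definition psi_plus :: "'e set \<Rightarrow> 'e set set \<Rightarrow> 'e set \<Rightarrow> 'e chowpoly" where
  "psi_plus E L F = (let e = (SOME e. e \<in> E) in
     (\<Sum>G\<in>{G\<in>proper_flats E L. e \<notin> G}. Xv G) - (\<Sum>G\<in>{G\<in>proper_flats E L. G \<subseteq> F}. Xv G))"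

end

theory Submission
  imports Defs
begin

lemma ig_add: "x \<in> ideal_gen S \<Longrightarrow> y \<in> ideal_gen S \<Longrightarrow> x + y \<in> ideal_gen S"
proof (induction x rule: ideal_gen.induct)
  case zero then show ?case by simp
next
  case (step g x r)
  have "r * g + x + y = r * g + (x + y)" by (simp add: algebra_simps)
  then show ?case using step ideal_gen.step by metis
qed

lemma ig_mult: "x \<in> ideal_gen S \<Longrightarrow> c * x \<in> ideal_gen S"
proof (induction x rule: ideal_gen.induct)
  case zero then show ?case by (simp add: ideal_gen.zero)
next
  case (step g x r)
  have "c * (r * g + x) = (c * r) * g + c * x" by (simp add: algebra_simps)
  then show ?case using step ideal_gen.step by metis
qed

lemma ig_gen: "g \<in> S \<Longrightarrow> g \<in> ideal_gen S"
  using ideal_gen.step[of g S 0 1, OF _ ideal_gen.zero] by simp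

lemma ig_neg: "x \<in> ideal_gen S \<Longrightarrow> - x \<in> ideal_gen S"
  using ig_mult[of x S "-1"] by simp

lemma ig_diff: "x \<in> ideal_gen S \<Longrightarrow> y \<in> ideal_gen S \<Longrightarrow> x - y \<in> ideal_gen S"
  using ig_add[of x S "-y"] ig_neg[of y S] by simp

lemma ig_sum: "finite A \<Longrightarrow> (\<forall>a\<in>A. f a \<in> ideal_gen S) \<Longrightarrow> sum f A \<in> ideal_gen S"
  by (induction A rule: finite_induct) (auto intro: ig_add ideal_gen.zero)

lemma ig_prod: "finite A \<Longrightarrow> (\<forall>a\<in>A. f a - g a \<in> ideal_gen S) \<Longrightarrow> prod f A - prod g A \<in> ideal_gen S"
proof (induction A rule: finite_induct)
  case empty then show ?case by (simp add: ideal_gen.zero)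
next
  case (insert a A)
  have e: "prod f (insert a A) - prod g (insert a A)
     = prod f A * (f a - g a) + g a * (prod f A - prod g A)"
    using insert by (simp add: algebra_simps)
  show ?case unfolding e using insert by (auto intro!: ig_add ig_mult)
qed

lemma pow_diff_factor: "\<exists>q. (a::'a::comm_ring_1) ^ n - (a - b) ^ n = b * q"
proof (induction n)
  case 0 then show ?case by (rule exI[of _ 0]) simp
next
  case (Suc n)
  then obtain q where q: "a ^ n - (a - b) ^ n = b * q" by blast
  have "a ^ Suc n - (a - b) ^ Suc n = a * (a ^ n - (a - b) ^ n) + b * (a - b) ^ n"
    by (simp add: algebra_simps)
  also have "\<dots> = b * (a * q + (a - b) ^ n)" using q by (simp add: algebra_simps)
  finally show ?case by blast
qed

lemma sum_split_filter:
  "finite A \<Longrightarrow> sum f {x\<in>A. P x} + sum f {x\<in>A. \<not> P x} = sum f A"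
proof -
  assume "finite A"
  have "sum f A = sum f ({x\<in>A. P x} \<union> {x\<in>A. \<not> P x})"
    by (rule arg_cong[where f="sum f"]) auto
  also have "\<dots> = sum f {x\<in>A. P x} + sum f {x\<in>A. \<not> P x}"
    by (rule sum.union_disjoint) (use \<open>finite A\<close> in auto)
  finally show ?thesis by simp
qed

lemma psi_ident:
  assumes fin: "finite (proper_flats E L)" and FP: "F0 \<in> proper_flats E L"
  shows "- psi_minus E L F0 - psi_plus E L F0
     = Xv F0 - (\<Sum>G\<in>{G\<in>proper_flats E L. \<not> F0 \<subseteq> G \<and> \<not> G \<subseteq> F0}. Xv G)"
proof -
  define P where "P = proper_flats E L"
  define e where "e = (SOME e. e \<in> E)"
  have finP: "finite P" using fin P_def by simp
  have A: "(\<Sum>G\<in>{G\<in>P. e \<in> G}. Xv G) + (\<Sum>G\<in>{G\<in>P. e \<notin> G}. Xv G) = (\<Sum>G\<in>P. Xv G)"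
    using sum_split_filter[OF finP, of Xv "\<lambda>G. e \<in> G"] by simp
  have B: "(\<Sum>G\<in>{G\<in>P. F0 \<subseteq> G}. Xv G) + (\<Sum>G\<in>{G\<in>P. G \<subseteq> F0}. Xv G)
      = (\<Sum>G\<in>{G\<in>P. F0 \<subseteq> G} \<union> {G\<in>P. G \<subseteq> F0}. Xv G) + (\<Sum>G\<in>{G\<in>P. F0 \<subseteq> G} \<inter> {G\<in>P. G \<subseteq> F0}. Xv G)"
    by (rule sum.union_inter[symmetric]) (use finP in auto)
  have i: "{G\<in>P. F0 \<subseteq> G} \<inter> {G\<in>P. G \<subseteq> F0} = {F0}" using FP P_def by auto
  have u: "{G\<in>P. F0 \<subseteq> G} \<union> {G\<in>P. G \<subseteq> F0} = {G\<in>P. F0 \<subseteq> G \<or> G \<subseteq> F0}" by auto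
  have C: "(\<Sum>G\<in>{G\<in>P. F0 \<subseteq> G \<or> G \<subseteq> F0}. Xv G) + (\<Sum>G\<in>{G\<in>P. \<not> (F0 \<subseteq> G \<or> G \<subseteq> F0)}. Xv G) = (\<Sum>G\<in>P. Xv G)"
    using sum_split_filter[OF finP, of Xv "\<lambda>G. F0 \<subseteq> G \<or> G \<subseteq> F0"] by simp
  have D: "{G\<in>P. \<not> (F0 \<subseteq> G \<or> G \<subseteq> F0)} = {G\<in>P. \<not> F0 \<subseteq> G \<and> \<not> G \<subseteq> F0}" by auto
  show ?thesis
    unfolding psi_minus_def psi_plus_def Let_def e_def[symmetric] P_def[symmetric]
    using A B C unfolding i u D by (simp add: algebra_simps)
qed

theorem corollary3p4:
  fixes E :: "'e set" and L :: "'e set set"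
    and k :: nat and F :: "nat \<Rightarrow> 'e set" and d :: "nat \<Rightarrow> nat"
  assumes "matroid_flats E L" and "loopless E L"
    and "\<forall>i<k. F i \<in> proper_flats E L"
    and "inj_on F {..<k}"
    and "\<forall>i<k. d i > 0"
  shows "((\<exists>\<sigma>. bij_betw \<sigma> {..<k} {..<k} \<and> (\<forall>i j. i < j \<and> j < k \<longrightarrow> F (\<sigma> i) \<subset> F (\<sigma> j)))
           \<longrightarrow> chow_eq E L (\<Prod>i<k. Xv (F i) ^ d i)
                 ((\<Prod>i<k. Xv (F i)) *
                  (\<Prod>i<k. (- psi_minus E L (F i) - psi_plus E L (F i)) ^ (d i - 1))))
       \<and> ((\<exists>i<k. \<exists>j<k. \<not> F i \<subseteq> F j \<and> \<not> F j \<subseteq> F i)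
           \<longrightarrow> chow_eq E L (\<Prod>i<k. Xv (F i) ^ d i) 0)"
proof -
  define P where "P = proper_flats E L"
  define S where "S = chow_relations E L"
  have finE: "finite E" and LE: "L \<subseteq> Pow E" using assms(1) unfolding matroid_flats_def by auto
  have finP: "finite P" unfolding P_def proper_flats_def
    using finite_subset[OF LE] finE by auto
  have FP: "\<forall>i<k. F i \<in> P" using assms(3) P_def by simp
  have each: "Xv (F i) ^ d i - Xv (F i) * (- psi_minus E L (F i) - psi_plus E L (F i)) ^ (d i - 1)
       \<in> ideal_gen S" if i: "i < k" for i
  proof -
    define a where "a = Xv (F i)"
    define b where "b = (\<Sum>G\<in>{G\<in>P. \<not> F i \<subseteq> G \<and> \<not> G \<subseteq> F i}. Xv G)"
    have ps: "- psi_minus E L (F i) - psi_plus E L (F i) = a - b"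
      using psi_ident[of E L "F i"] finP FP i unfolding P_def a_def b_def by simp
    obtain q where q: "a ^ (d i - 1) - (a - b) ^ (d i - 1) = b * q"
      using pow_diff_factor by blast
    have di: "d i = Suc (d i - 1)" using assms(5) i by simp
    have "a ^ d i - a * (a - b) ^ (d i - 1) = a * (a ^ (d i - 1) - (a - b) ^ (d i - 1))"
      by (subst di, simp add: algebra_simps)
    also have "\<dots> = q * (a * b)" using q by (simp add: algebra_simps)
    finally have eq: "a ^ d i - a * (a - b) ^ (d i - 1) = q * (a * b)" .
    have "a * b = (\<Sum>G\<in>{G\<in>P. \<not> F i \<subseteq> G \<and> \<not> G \<subseteq> F i}. Xv (F i) * Xv G)"
      unfolding a_def b_def by (simp add: sum_distrib_left)
    also have "\<dots> \<in> ideal_gen S"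
    proof (rule ig_sum)
      show "finite {G\<in>P. \<not> F i \<subseteq> G \<and> \<not> G \<subseteq> F i}" using finP by simp
      show "\<forall>G\<in>{G\<in>P. \<not> F i \<subseteq> G \<and> \<not> G \<subseteq> F i}. Xv (F i) * Xv G \<in> ideal_gen S"
      proof
        fix G assume G: "G \<in> {G\<in>P. \<not> F i \<subseteq> G \<and> \<not> G \<subseteq> F i}"
        have "Xv (F i) * Xv G \<in> S"
          unfolding S_def chow_relations_def using G FP i P_def by blast
        then show "Xv (F i) * Xv G \<in> ideal_gen S" by (rule ig_gen)
      qed
    qed
    finally have "a * b \<in> ideal_gen S" .
    then show ?thesis using eq ps ig_mult unfolding a_def by metis
  qed
  have part1: "chow_eq E L (\<Prod>i<k. Xv (F i) ^ d i)
                 ((\<Prod>i<k. Xv (F i)) *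
                  (\<Prod>i<k. (- psi_minus E L (F i) - psi_plus E L (F i)) ^ (d i - 1)))"
    unfolding chow_eq_def S_def[symmetric] prod.distrib[symmetric]
    by (rule ig_prod) (use each in auto)
  have part2: "chow_eq E L (\<Prod>i<k. Xv (F i) ^ d i) 0"
    if ex: "\<exists>i<k. \<exists>j<k. \<not> F i \<subseteq> F j \<and> \<not> F j \<subseteq> F i"
  proof -
    obtain i j where ij: "i < k" "j < k" "\<not> F i \<subseteq> F j" "\<not> F j \<subseteq> F i" using ex by blast
    have ne: "i \<noteq> j" using ij by auto
    define f where "f = (\<lambda>i. Xv (F i) ^ d i)"
    have "(\<Prod>i<k. f i) = f i * (\<Prod>l\<in>{..<k} - {i}. f l)"
      using ij by (simp add: prod.remove)
    also have "(\<Prod>l\<in>{..<k} - {i}. f l) = f j * (\<Prod>l\<in>{..<k} - {i} - {j}. f l)"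
      using ij ne by (intro prod.remove) auto
    finally have pe: "(\<Prod>i<k. f i) = f i * (f j * (\<Prod>l\<in>{..<k} - {i} - {j}. f l))" .
    have di: "d i = Suc (d i - 1)" and dj: "d j = Suc (d j - 1)" using assms(5) ij by auto
    have fi: "f i = Xv (F i) * Xv (F i) ^ (d i - 1)" unfolding f_def by (subst di, simp)
    have fj: "f j = Xv (F j) * Xv (F j) ^ (d j - 1)" unfolding f_def by (subst dj, simp)
    have "Xv (F i) * Xv (F j) \<in> S"
      unfolding S_def chow_relations_def using FP ij P_def by blast
    then have gen: "Xv (F i) * Xv (F j) \<in> ideal_gen S" by (rule ig_gen)
    have "(\<Prod>i<k. f i) = (Xv (F i) ^ (d i - 1) * Xv (F j) ^ (d j - 1) * (\<Prod>l\<in>{..<k} - {i} - {j}. f l)) * (Xv (F i) * Xv (F j))"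
      unfolding pe fi fj by (simp add: algebra_simps)
    then have "(\<Prod>i<k. f i) \<in> ideal_gen S" using gen ig_mult by metis
    then show ?thesis unfolding chow_eq_def S_def f_def by simp
  qed
  show ?thesis using part1 part2 by blast
qed

end
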